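(* Let $\varphi_1,\varphi_2$ be Orlicz functions and $w$ a weight on $I=[0,\gamma)$. The following are equivalent: (i) $\varphi_1\prec\varphi_2$ when $\gamma=\infty$ (resp. $\varphi_1\prec_\infty\varphi_2$ when $\gamma<\infty$); (ii) $\mathcal M_{\varphi_2,w}\hookrightarrow\mathcal M_{\varphi_1,w}$, i.e. $\mathcal M_{\varphi_2,w}\subset\mathcal M_{\varphi_1,w}$ (with continuous inclusion).
   Context: Let $I=[0,\gamma)$, $0<\gamma\le\infty$, Lebesgue measure $m$, $L_0$ the measurable functions on $I$, $f^*$ the decreasing rearrangement of $f$. Orlicz function: convex $\varphi:[0,\infty)\to[0,\infty)$, $\varphi(0)=0$, $\varphi(u)>0$ for $u>0$. For Orlicz functions, $\varphi_1\prec\varphi_2$ means there is $b>0$ with $\varphi_1(u)\le\varphi_2(bu)$ for all $u\ge0$; $\varphi_1\prec_\infty\varphi_2$ means there are $b>0$, $u_0\ge0$ with $\varphi_1(u)\le\varphi_2(bu)$ for all $u\ge u_0$. Weight: positive decreasing locally integrable $w$ on $I$, $W(t)=\int_0^tw$, $W(\infty)=\infty$ if $\gamma=\infty$. Halperin level function $g^0$ of $g\ge0$ w.r.t. $w$: with $G(a,b)=\int_a^bg$, $W(a,b)=\int_a^bw$, $(a,b]$ is a level interval if $G(a,t)/W(a,t)\le G(a,b)/W(a,b)$ for all $t\in(a,b]$, maximal if not contained in another; $g^0=\frac{G(a,b)}{W(a,b)}w$ on each maximal level interval and $g^0=g$ elsewhere. $Q_{\varphi,w}(f)=\int_I\varphi((f^*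 )^0/w)w$; $\mathcal M_{\varphi,w}=\{f:Q_{\varphi,w}(kf)<\infty\text{ for some }k>0\}$ with Luxemburg norm $\|f\|_{\mathcal M_{\varphi,w}}=\inf\{\epsilon>0:Q_{\varphi,w}(f/\epsilon)\le1\}$. *)

theory Defs
  imports "HOL-Analysis.Analysis"
begin

definition Ival :: "ereal \<Rightarrow> real set" where
  "Ival \<gamma> = {t. 0 \<le> t \<and> ereal t < \<gamma>}"

definition orlicz_fun :: "(real \<Rightarrow> real) \<Rightarrow> bool" where
  "orlicz_fun \<phi> \<longleftrightarrow> convex_on {0..} \<phi> \<and> \<phi> 0 = 0 \<and> (\<forall>u>0. \<phi> u > 0)"

definition orlicz_prec :: "(real \<Rightarrow> real) \<Rightarrow> (real \<Rightarrow> real) \<Rightarrow> bool" where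
  "orlicz_prec \<phi>1 \<phi>2 \<longleftrightarrow> (\<exists>b>0. \<forall>u\<ge>0. \<phi>1 u \<le> \<phi>2 (b * u))"

definition orlicz_prec_inf :: "(real \<Rightarrow> real) \<Rightarrow> (real \<Rightarrow> real) \<Rightarrow> bool" where
  "orlicz_prec_inf \<phi>1 \<phi>2 \<longleftrightarrow> (\<exists>b>0. \<exists>u0\<ge>0. \<forall>u\<ge>u0. \<phi>1 u \<le> \<phi>2 (b * u))"

definition weight :: "ereal \<Rightarrow> (real \<Rightarrow> real) \<Rightarrow> bool" where
  "weight \<gamma> w \<longleftrightarrow>
     (\<forall>t\<in>Ival \<gamma>. w t > 0) \<and>
     (\<forall>s\<in>Ival \<gamma>. \<forall>t\<in>Ival \<gamma>. s \<le> t \<longrightarrow> w t \<le> w s) \<and>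
     (\<forall>b. 0 \<le> b \<and> ereal b < \<gamma> \<longrightarrow> set_integrable lborel {0..b} w) \<and>
     (\<gamma> = \<infinity> \<longrightarrow> (\<integral>\<^sup>+ t\<in>{0..}. ennreal (w t) \<partial>lborel) = \<infinity>)"

definition distf :: "ereal \<Rightarrow> (real \<Rightarrow> real) \<Rightarrow> ennreal \<Rightarrow> ennreal" where
  "distf \<gamma> f s = emeasure lebesgue {x \<in> Ival \<gamma>. ennreal \<bar>f x\<bar> > s}"

definition rearr :: "ereal \<Rightarrow> (real \<Rightarrow> real) \<Rightarrow> real \<Rightarrow> ennreal" where
  "rearr \<gamma> f t = Inf {s. distf \<gamma> f s \<le> ennreal t}"

definition Gint :: "(real \<Rightarrow> ennreal) \<Rightarrow> real \<Rightarrow> real \<Rightarrow> ennreal" where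
  "Gint g a b = (\<integral>\<^sup>+ t\<in>{a<..b}. g t \<partial>lborel)"

definition Wint :: "(real \<Rightarrow> real) \<Rightarrow> real \<Rightarrow> real \<Rightarrow> ennreal" where
  "Wint w a b = (\<integral>\<^sup>+ t\<in>{a<..b}. ennreal (w t) \<partial>lborel)"

definition level_interval :: "ereal \<Rightarrow> (real \<Rightarrow> real) \<Rightarrow> (real \<Rightarrow> ennreal) \<Rightarrow> real \<Rightarrow> real \<Rightarrow> bool" where
  "level_interval \<gamma> w g a b \<longleftrightarrow> 0 \<le> a \<and> a < b \<and> ereal b < \<gamma> \<and>
     (\<forall>t\<in>{a<..b}. Gint g a t / Wint w a t \<le> Gint g a b / Wint w a b)"

definition max_level_interval :: "ereal \<Rightarrow> (real \<Rightarrow> real) \<Rightarrow> (real \<Rightarrow> ennreal) \<Rightarrow> real \<Rightarrow> real \<Rightarrow> bool" where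
  "max_level_interval \<gamma> w g a b \<longleftrightarrow> level_interval \<gamma> w g a b \<and>
     (\<forall>a' b'. level_interval \<gamma> w g a' b' \<and> {a<..b} \<subseteq> {a'<..b'} \<longrightarrow> a' = a \<and> b' = b)"

definition level_fun :: "ereal \<Rightarrow> (real \<Rightarrow> real) \<Rightarrow> (real \<Rightarrow> ennreal) \<Rightarrow> real \<Rightarrow> ennreal" where
  "level_fun \<gamma> w g t =
     (if \<exists>a b. max_level_interval \<gamma> w g a b \<and> t \<in> {a<..b}
      then (let (a, b) = (SOME (a, b). max_level_interval \<gamma> w g a b \<and> t \<in> {a<..b})
            in Gint g a b / Wint w a b * ennreal (w t))
      else g t)"

definition phi_ext :: "(real \<Rightarrow> real) \<Rightarrow> ennreal \<Rightarrow> ennreal" where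
  "phi_ext \<phi> x = (if x = \<infinity> then \<infinity> else ennreal (\<phi> (enn2real x)))"

definition Qmod :: "ereal \<Rightarrow> (real \<Rightarrow> real) \<Rightarrow> (real \<Rightarrow> real) \<Rightarrow> (real \<Rightarrow> real) \<Rightarrow> ennreal" where
  "Qmod \<gamma> \<phi> w f =
     (\<integral>\<^sup>+ t\<in>Ival \<gamma>. phi_ext \<phi> (level_fun \<gamma> w (rearr \<gamma> f) t / ennreal (w t)) * ennreal (w t) \<partial>lborel)"

definition Mspace :: "ereal \<Rightarrow> (real \<Rightarrow> real) \<Rightarrow> (real \<Rightarrow> real) \<Rightarrow> (real \<Rightarrow> real) set" where
  "Mspace \<gamma> \<phi> w = {f. f \<in> borel_measurable (restrict_space lebesgue (Ival \<gamma>)) \<and>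
                       (\<exists>k>0. Qmod \<gamma> \<phi> w (\<lambda>x. k * f x) < \<infinity>)}"

definition Mnorm :: "ereal \<Rightarrow> (real \<Rightarrow> real) \<Rightarrow> (real \<Rightarrow> real) \<Rightarrow> (real \<Rightarrow> real) \<Rightarrow> real" where
  "Mnorm \<gamma> \<phi> w f = Inf {\<epsilon>. \<epsilon> > 0 \<and> Qmod \<gamma> \<phi> w (\<lambda>x. f x / \<epsilon>) \<le> 1}"

end

theory Submission
  imports Defs
begin


lemma nn_envelope:
  fixes F :: "'a \<Rightarrow> ennreal"
  shows "\<exists>h. h \<in> borel_measurable M \<and> (\<forall>x. h x \<le> F x) \<and> integral\<^sup>N M h = integral\<^sup>N M F"
proof -
  let ?A = "integral\<^sup>S M ` {g. simple_function M g \<and> g \<le> F}"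
  have "integral\<^sup>S M (\<lambda>_. 0) \<in> ?A" by (intro imageI) (auto simp: le_fun_def)
  then have ne: "?A \<noteq> {}" by blast
  obtain f :: "nat \<Rightarrow> ennreal" where f: "range f \<subseteq> ?A" "Sup ?A = (SUP i. f i)"
    using ennreal_Sup_countable_SUP[OF ne] by blast
  have ex: "\<forall>n. \<exists>g. simple_function M g \<and> g \<le> F \<and> integral\<^sup>S M g = f n"
  proof
    fix n
    have "f n \<in> ?A" using f(1) by blast
    then obtain g where "g \<in> {g. simple_function M g \<and> g \<le> F}" "f n = integral\<^sup>S M g"
      by (rule imageE)
    then show "\<exists>g. simple_function M g \<and> g \<le> F \<and> integral\<^sup>S M g = f n" by auto
  qed
  obtain g where g0: "\<forall>n. simple_function M (g n) \<and> g n \<le> F \<and> integral\<^sup>S M (g n) = f n"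
    using choice[OF ex] by blast
  then have g: "\<And>n. simple_function M (g n)" "\<And>n. g n \<le> F" "\<And>n. integral\<^sup>S M (g n) = f n"
    by auto
  define h where "h x = (SUP n. g n x)" for x
  have hm: "h \<in> borel_measurable M" unfolding h_def
    using g(1) by (intro borel_measurable_SUP) (auto intro: borel_measurable_simple_function)
  have hle: "\<forall>x. h x \<le> F x" unfolding h_def using g(2) by (auto intro!: SUP_least simp: le_fun_def)
  have "integral\<^sup>N M F = (SUP i. f i)" unfolding nn_integral_def using f(2) by simp
  also have "\<dots> \<le> integral\<^sup>N M h"
  proof (rule SUP_least)
    fix n
    have "f n = integral\<^sup>N M (g n)" using g by (simp add: nn_integral_eq_simple_integral)
    also have "\<dots> \<le> integral\<^sup>N M h"
      by (rule nn_integral_mono) (auto simp: h_def intro: SUP_upper)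
    finally show "f n \<le> integral\<^sup>N M h" .
  qed
  finally have "integral\<^sup>N M F \<le> integral\<^sup>N M h" .
  moreover have "integral\<^sup>N M h \<le> integral\<^sup>N M F" using hle by (intro nn_integral_mono) auto
  ultimately show ?thesis using hm hle by (intro exI[of _ h]) auto
qed

lemma nn_integral_add_le_meas:
  fixes F G :: "'a \<Rightarrow> ennreal"
  assumes G: "G \<in> borel_measurable M"
  shows "(\<integral>\<^sup>+x. F x + G x \<partial>M) \<le> integral\<^sup>N M F + integral\<^sup>N M G"
proof -
  obtain H where H: "H \<in> borel_measurable M" "\<And>x. H x \<le> F x + G x"
     "integral\<^sup>N M H = (\<integral>\<^sup>+x. F x + G x \<partial>M)"
    using nn_envelope[of M "\<lambda>x. F x + G x"] by blast
  have "(\<integral>\<^sup>+x. F x + G x \<partial>M) = integral\<^sup>N M H" using H by simp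
  also have "\<dots> \<le> (\<integral>\<^sup>+x. (if G x = top then 0 else H x - G x) + G x \<partial>M)"
  proof (rule nn_integral_mono)
    fix x
    show "H x \<le> (if G x = top then 0 else H x - G x) + G x"
    proof (cases "G x = top")
      case True then show ?thesis by simp
    next
      case False
      have "H x \<le> H x - G x + G x"
        unfolding diff_add_self_ennreal by (cases "G x \<le> H x") auto
      then show ?thesis using False by simp
    qed
  qed
  also have "\<dots> = (\<integral>\<^sup>+x. (if G x = top then 0 else H x - G x) \<partial>M) + integral\<^sup>N M G"
    using H G by (intro nn_integral_add) auto
  also have "\<dots> \<le> integral\<^sup>N M F + integral\<^sup>N M G"
  proof (intro add_mono nn_integral_mono order_refl)
    fix x
    have "H x \<le> G x + F x" using H(2)[of x] by (simp add: add.commute)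
    then show "(if G x = top then 0 else H x - G x) \<le> F x"
      by (simp add: ennreal_minus_le_iff)
  qed
  finally show ?thesis .
qed

lemma nn_integral_cmult_le:
  fixes F :: "'a \<Rightarrow> ennreal"
  assumes c: "c > 0"
  shows "(\<integral>\<^sup>+x. ennreal c * F x \<partial>M) \<le> ennreal c * integral\<^sup>N M F"
proof -
  obtain H where H: "H \<in> borel_measurable M" "\<And>x. H x \<le> ennreal c * F x"
     "integral\<^sup>N M H = (\<integral>\<^sup>+x. ennreal c * F x \<partial>M)"
    using nn_envelope[of M "\<lambda>x. ennreal c * F x"] by blast
  have eq: "H x = ennreal c * (ennreal (1/c) * H x)" for x
    using c by (simp add: mult.assoc[symmetric] ennreal_mult[symmetric])
  have le: "ennreal (1/c) * H x \<le> F x" for x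
  proof -
    have "ennreal (1/c) * H x \<le> ennreal (1/c) * (ennreal c * F x)" using H(2) by (intro mult_left_mono) auto
    also have "\<dots> = F x" using c by (simp add: mult.assoc[symmetric] ennreal_mult[symmetric])
    finally show ?thesis .
  qed
  have "(\<integral>\<^sup>+x. ennreal c * F x \<partial>M) = (\<integral>\<^sup>+x. ennreal c * (ennreal (1/c) * H x) \<partial>M)"
    using H(3) eq by simp
  also have "\<dots> = ennreal c * (\<integral>\<^sup>+x. ennreal (1/c) * H x \<partial>M)"
    using H(1) by (intro nn_integral_cmult) auto
  also have "\<dots> \<le> ennreal c * integral\<^sup>N M F"
    by (intro mult_left_mono nn_integral_mono le) auto
  finally show ?thesis .
qed


lemma nn_integral_cmult_eq:
  fixes F :: "'a \<Rightarrow> ennreal"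
  assumes c: "c > 0"
  shows "(\<integral>\<^sup>+x. ennreal c * F x \<partial>M) = ennreal c * integral\<^sup>N M F"
proof (rule antisym)
  show "(\<integral>\<^sup>+x. ennreal c * F x \<partial>M) \<le> ennreal c * integral\<^sup>N M F"
    using nn_integral_cmult_le[OF c] .
  have "integral\<^sup>N M F = (\<integral>\<^sup>+x. ennreal (1/c) * (ennreal c * F x) \<partial>M)"
    using c by (simp add: mult.assoc[symmetric] ennreal_mult[symmetric])
  also have "\<dots> \<le> ennreal (1/c) * (\<integral>\<^sup>+x. ennreal c * F x \<partial>M)"
    using c by (intro nn_integral_cmult_le) auto
  finally have "ennreal c * integral\<^sup>N M F \<le> ennreal c * (ennreal (1/c) * (\<integral>\<^sup>+x. ennreal c * F x \<partial>M))"
    by (intro mult_left_mono) auto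
  also have "\<dots> = (\<integral>\<^sup>+x. ennreal c * F x \<partial>M)"
    using c by (simp add: mult.assoc[symmetric] ennreal_mult[symmetric])
  finally show "ennreal c * integral\<^sup>N M F \<le> (\<integral>\<^sup>+x. ennreal c * F x \<partial>M)" .
qed

lemma ennreal_Inf_cmult:
  fixes S :: "ennreal set"
  assumes c: "c > 0"
  shows "Inf ((\<lambda>s. ennreal c * s) ` S) = ennreal c * Inf S"
proof (rule antisym)
  have "ennreal (1/c) * Inf ((\<lambda>s. ennreal c * s) ` S) \<le> Inf S"
  proof (rule Inf_greatest)
    fix s assume "s \<in> S"
    then have "Inf ((\<lambda>s. ennreal c * s) ` S) \<le> ennreal c * s" by (auto intro: Inf_lower)
    then have "ennreal (1/c) * Inf ((\<lambda>s. ennreal c * s) ` S) \<le> ennreal (1/c) * (ennreal c * s)"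
      by (intro mult_left_mono) auto
    also have "\<dots> = s" using c by (simp add: mult.assoc[symmetric] ennreal_mult[symmetric])
    finally show "ennreal (1/c) * Inf ((\<lambda>s. ennreal c * s) ` S) \<le> s" .
  qed
  then have "ennreal c * (ennreal (1/c) * Inf ((\<lambda>s. ennreal c * s) ` S)) \<le> ennreal c * Inf S"
    by (intro mult_left_mono) auto
  then show "Inf ((\<lambda>s. ennreal c * s) ` S) \<le> ennreal c * Inf S"
    using c by (simp add: mult.assoc[symmetric] ennreal_mult[symmetric])
  show "ennreal c * Inf S \<le> Inf ((\<lambda>s. ennreal c * s) ` S)"
    by (rule Inf_greatest) (auto intro!: mult_left_mono Inf_lower)
qed

lemma ennreal_cmult_less_iff:
  assumes c: "c > 0"
  shows "s < ennreal c * y \<longleftrightarrow> s / ennreal c < y"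
  using c by (simp add: divide_less_ennreal mult.commute)

lemma distf_scale:
  assumes c: "c > 0"
  shows "distf \<gamma> (\<lambda>x. c * f x) s = distf \<gamma> f (s / ennreal c)"
proof -
  have "ennreal \<bar>c * f x\<bar> = ennreal c * ennreal \<bar>f x\<bar>" for x
    using c by (simp add: abs_mult ennreal_mult)
  then show ?thesis unfolding distf_def using ennreal_cmult_less_iff[OF c] by simp
qed

lemma rearr_scale:
  assumes c: "c > 0"
  shows "rearr \<gamma> (\<lambda>x. c * f x) t = ennreal c * rearr \<gamma> f t"
proof -
  have "{s. distf \<gamma> (\<lambda>x. c * f x) s \<le> ennreal t} = (\<lambda>s. ennreal c * s) ` {s. distf \<gamma> f s \<le> ennreal t}"
  proof (rule set_eqI, rule iffI)
    fix s assume "s \<in> {s. distf \<gamma> (\<lambda>x. c * f x) s \<le> ennreal t}"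
    then have "s / ennreal c \<in> {s. distf \<gamma> f s \<le> ennreal t}" by (simp add: distf_scale[OF c])
    moreover have "s = ennreal c * (s / ennreal c)"
      using c by (simp add: ennreal_times_divide mult.commute[of "ennreal c"] mult_divide_eq_ennreal)
    ultimately show "s \<in> (\<lambda>s. ennreal c * s) ` {s. distf \<gamma> f s \<le> ennreal t}" by blast
  next
    fix s assume "s \<in> (\<lambda>s. ennreal c * s) ` {s. distf \<gamma> f s \<le> ennreal t}"
    then obtain s' where "s = ennreal c * s'" "distf \<gamma> f s' \<le> ennreal t" by auto
    moreover have "(ennreal c * s') / ennreal c = s'"
      using c by (simp add: mult.commute[of "ennreal c"] mult_divide_eq_ennreal)
    ultimately show "s \<in> {s. distf \<gamma> (\<lambda>x. c * f x) s \<le> ennreal t}" by (simp add: distf_scale[OF c])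
  qed
  then show ?thesis unfolding rearr_def using ennreal_Inf_cmult[OF c] by simp
qed

lemma Gint_scale:
  assumes c: "c > 0"
  shows "Gint (\<lambda>t. ennreal c * g t) a b = ennreal c * Gint g a b"
  unfolding Gint_def using nn_integral_cmult_eq[OF c, of lborel "\<lambda>t. g t * indicator {a<..b} t"]
  by (simp add: mult.assoc)

lemma level_interval_scale:
  assumes c: "c > 0"
  shows "level_interval \<gamma> w (\<lambda>t. ennreal c * g t) = level_interval \<gamma> w g"
proof (intro ext)
  fix a b
  have "(ennreal c * x / y \<le> ennreal c * x' / y') \<longleftrightarrow> (x / y \<le> x' / y')" for x y x' y' :: ennreal
    using c by (simp add: ennreal_times_divide[symmetric] ennreal_mult_le_mult_iff)
  then show "level_interval \<gamma> w (\<lambda>t. ennreal c * g t) a b = level_interval \<gamma> w g a b"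
    unfolding level_interval_def Gint_scale[OF c] by simp
qed

lemma level_fun_scale:
  assumes c: "c > 0"
  shows "level_fun \<gamma> w (\<lambda>t. ennreal c * g t) t = ennreal c * level_fun \<gamma> w g t"
proof -
  have M: "max_level_interval \<gamma> w (\<lambda>t. ennreal c * g t) = max_level_interval \<gamma> w g"
    unfolding max_level_interval_def[abs_def] level_interval_scale[OF c] ..
  show ?thesis unfolding level_fun_def M Gint_scale[OF c]
    by (auto simp: Let_def ennreal_times_divide[symmetric] mult.assoc split: prod.split)
qed

lemma level_rearr_scale:
  assumes c: "c > 0"
  shows "level_fun \<gamma> w (rearr \<gamma> (\<lambda>x. c * f x)) t = ennreal c * level_fun \<gamma> w (rearr \<gamma> f) t"
proof -
  have "rearr \<gamma> (\<lambda>x. c * f x) = (\<lambda>t. ennreal c * rearr \<gamma> f t)"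
    using rearr_scale[OF c] by auto
  then show ?thesis using level_fun_scale[OF c] by simp
qed


lemma orl_nonneg: "orlicz_fun \<phi> \<Longrightarrow> 0 \<le> x \<Longrightarrow> 0 \<le> \<phi> x"
proof -
  assume a: "orlicz_fun \<phi>" "0 \<le> x"
  show "0 \<le> \<phi> x"
  proof (cases "x = 0")
    case True then show ?thesis using a unfolding orlicz_fun_def by simp
  next
    case False then have "x > 0" using a by simp
    then show ?thesis using a unfolding orlicz_fun_def by (simp add: less_imp_le)
  qed
qed

lemma orl_scale:
  assumes "orlicz_fun \<phi>" "0 \<le> c" "c \<le> 1" "0 \<le> x"
  shows "\<phi> (c * x) \<le> c * \<phi> x"
proof -
  have cv: "convex_on {0..} \<phi>" and z: "\<phi> 0 = 0" using assms(1) unfolding orlicz_fun_def by auto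
  have "\<phi> ((1 - c) *\<^sub>R 0 + c *\<^sub>R x) \<le> (1 - c) * \<phi> 0 + c * \<phi> x"
    using convex_onD[OF cv, of c 0 x] assms by auto
  then show ?thesis using z by simp
qed

lemma orl_mono:
  assumes "orlicz_fun \<phi>" "0 \<le> x" "x \<le> y"
  shows "\<phi> x \<le> \<phi> y"
proof (cases "y = 0")
  case True then show ?thesis using assms by simp
next
  case False
  then have y: "y > 0" using assms by simp
  have "\<phi> ((x / y) * y) \<le> (x / y) * \<phi> y"
    using assms y by (intro orl_scale) (auto simp: divide_le_eq)
  also have "\<dots> \<le> \<phi> y" using assms y orl_nonneg[OF assms(1), of y]
    by (intro mult_left_le_one_le) (auto simp: divide_le_eq)
  finally show ?thesis using y by simp
qed

lemma orl_strict:
  assumes "orlicz_fun \<phi>" "0 \<le> x" "x < y"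
  shows "\<phi> x < \<phi> y"
proof -
  have y: "y > 0" using assms by simp
  have py: "\<phi> y > 0" using assms(1) y unfolding orlicz_fun_def by auto
  have "\<phi> ((x / y) * y) \<le> (x / y) * \<phi> y"
    using assms y by (intro orl_scale) (auto simp: divide_le_eq)
  also have "\<dots> < \<phi> y" using assms y py
    by (simp add: divide_less_eq mult_less_cancel_right1 mult.commute)
  finally show ?thesis using y by simp
qed

lemma orl_ge:
  assumes "orlicz_fun \<phi>" "1 \<le> x"
  shows "x * \<phi> 1 \<le> \<phi> x"
proof -
  have "\<phi> ((1 / x) * x) \<le> (1 / x) * \<phi> x" using assms by (intro orl_scale) auto
  then show ?thesis using assms(2) by (simp add: field_simps)
qed

lemma phi_ext_scale:
  assumes "orlicz_fun \<phi>" "0 < c" "c \<le> 1"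
  shows "phi_ext \<phi> (ennreal c * y) \<le> ennreal c * phi_ext \<phi> y"
proof (cases "y = top")
  case True then show ?thesis using assms by (simp add: phi_ext_def ennreal_mult_top)
next
  case False
  then obtain r where r: "y = ennreal r" "0 \<le> r" by (cases y) auto
  have "phi_ext \<phi> (ennreal c * y) = ennreal (\<phi> (c * r))"
    using r assms by (simp add: phi_ext_def ennreal_mult[symmetric])
  also have "\<dots> \<le> ennreal (c * \<phi> r)" using orl_scale[OF assms(1), of c r] assms r
    by (intro ennreal_leI) auto
  also have "\<dots> = ennreal c * phi_ext \<phi> y"
    using r assms orl_nonneg[OF assms(1) r(2)] by (simp add: phi_ext_def ennreal_mult)
  finally show ?thesis .
qed

lemma phi_ext_cmp:
  assumes "\<forall>x\<ge>0. \<phi>1 x \<le> \<phi>2 (b * x) + K" "b > 0" "K \<ge> 0"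
  shows "phi_ext \<phi>1 y \<le> phi_ext \<phi>2 (ennreal b * y) + ennreal K"
proof (cases "y = top")
  case True then show ?thesis using assms by (simp add: phi_ext_def ennreal_mult_top)
next
  case False
  then obtain r where r: "y = ennreal r" "0 \<le> r" by (cases y) auto
  have "phi_ext \<phi>1 y = ennreal (\<phi>1 r)" using r by (simp add: phi_ext_def)
  also have "\<dots> \<le> ennreal (\<phi>2 (b * r) + K)" using assms r by (intro ennreal_leI) auto
  also have "\<dots> \<le> ennreal (\<phi>2 (b * r)) + ennreal K"
  proof (cases "\<phi>2 (b * r) \<ge> 0")
    case True then show ?thesis using assms by (simp add: ennreal_plus)
  next
    case False
    then have "ennreal (\<phi>2 (b * r) + K) \<le> ennreal K" by (intro ennreal_leI) auto
    then show ?thesis by (simp add: add_increasing)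
  qed
  also have "ennreal (\<phi>2 (b * r)) = phi_ext \<phi>2 (ennreal b * y)"
    using r assms by (simp add: phi_ext_def ennreal_mult[symmetric])
  finally show ?thesis .
qed

lemma Q_scale_le:
  assumes "orlicz_fun \<phi>" "0 < c" "c \<le> 1"
  shows "Qmod \<gamma> \<phi> w (\<lambda>x. c * f x) \<le> ennreal c * Qmod \<gamma> \<phi> w f"
proof -
  let ?L = "\<lambda>t. level_fun \<gamma> w (rearr \<gamma> f) t"
  have "Qmod \<gamma> \<phi> w (\<lambda>x. c * f x) =
     (\<integral>\<^sup>+t. phi_ext \<phi> (ennreal c * (?L t / ennreal (w t))) * ennreal (w t) * indicator (Ival \<gamma>) t \<partial>lborel)"
    unfolding Qmod_def level_rearr_scale[OF assms(2)] by (simp add: ennreal_times_divide)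
  also have "\<dots> \<le> (\<integral>\<^sup>+t. ennreal c * (phi_ext \<phi> (?L t / ennreal (w t)) * ennreal (w t) * indicator (Ival \<gamma>) t) \<partial>lborel)"
    by (intro nn_integral_mono) (auto simp: mult.assoc[symmetric] intro!: mult_right_mono phi_ext_scale[OF assms])
  also have "\<dots> = ennreal c * Qmod \<gamma> \<phi> w f"
    unfolding Qmod_def using assms(2) by (intro nn_integral_cmult_eq)
  finally show ?thesis .
qed

lemma Ival_sets[measurable]: "Ival \<gamma> \<in> sets borel"
proof -
  have "Ival \<gamma> = {t. 0 \<le> t} \<inter> {t. ereal t < \<gamma>}" unfolding Ival_def by auto
  moreover have "{t. ereal t < \<gamma>} \<in> sets borel" by measurable
  ultimately show ?thesis by simp
qed

lemma Q_cmp: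
  assumes w: "weight \<gamma> w" and g0: "0 < \<gamma>"
    and cmp: "\<forall>x\<ge>0. \<phi>1 x \<le> \<phi>2 (b * x) + K" and b: "b > 0" and K: "K \<ge> 0"
  shows "Qmod \<gamma> \<phi>1 w f \<le> Qmod \<gamma> \<phi>2 w (\<lambda>x. b * f x) +
           ennreal K * (\<integral>\<^sup>+t. ennreal (w 0) * indicator (Ival \<gamma>) t \<partial>lborel)"
proof -
  let ?L = "\<lambda>t. level_fun \<gamma> w (rearr \<gamma> f) t"
  have I0: "0 \<in> Ival \<gamma>" using g0 by (simp add: Ival_def zero_ereal_def)
  have wle: "w t \<le> w 0" if "t \<in> Ival \<gamma>" for t
    using w that I0 unfolding weight_def by (auto simp: Ival_def)
  have "Qmod \<gamma> \<phi>1 w f \<le> (\<integral>\<^sup>+t. phi_ext \<phi>2 (ennreal b * (?L t / ennreal (w t))) * ennreal (w t) * indicator (Ival \<gamma>) t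
        + ennreal K * (ennreal (w 0) * indicator (Ival \<gamma>) t) \<partial>lborel)"
    unfolding Qmod_def
  proof (intro nn_integral_mono)
    fix t
    show "phi_ext \<phi>1 (?L t / ennreal (w t)) * ennreal (w t) * indicator (Ival \<gamma>) t \<le>
      phi_ext \<phi>2 (ennreal b * (?L t / ennreal (w t))) * ennreal (w t) * indicator (Ival \<gamma>) t
        + ennreal K * (ennreal (w 0) * indicator (Ival \<gamma>) t)"
    proof (cases "t \<in> Ival \<gamma>")
      case False then show ?thesis by simp
    next
      case True
      have "phi_ext \<phi>1 (?L t / ennreal (w t)) * ennreal (w t) \<le>
         (phi_ext \<phi>2 (ennreal b * (?L t / ennreal (w t))) + ennreal K) * ennreal (w t)"
        by (intro mult_right_mono phi_ext_cmp[OF cmp b K]) auto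
      also have "\<dots> = phi_ext \<phi>2 (ennreal b * (?L t / ennreal (w t))) * ennreal (w t) + ennreal K * ennreal (w t)"
        by (simp add: distrib_right)
      also have "\<dots> \<le> phi_ext \<phi>2 (ennreal b * (?L t / ennreal (w t))) * ennreal (w t) + ennreal K * ennreal (w 0)"
        using wle[OF True] by (intro add_left_mono mult_left_mono ennreal_leI) auto
      finally show ?thesis using True by simp
    qed
  qed
  also have "\<dots> \<le> (\<integral>\<^sup>+t. phi_ext \<phi>2 (ennreal b * (?L t / ennreal (w t))) * ennreal (w t) * indicator (Ival \<gamma>) t \<partial>lborel)
      + (\<integral>\<^sup>+t. ennreal K * (ennreal (w 0) * indicator (Ival \<gamma>) t) \<partial>lborel)"
    by (rule nn_integral_add_le_meas) measurable
  also have "(\<integral>\<^sup>+t. ennreal K * (ennreal (w 0) * indicator (Ival \<gamma>) t) \<partial>lborel) =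
      ennreal K * (\<integral>\<^sup>+t. ennreal (w 0) * indicator (Ival \<gamma>) t \<partial>lborel)"
    by (rule nn_integral_cmult) measurable
  also have "(\<integral>\<^sup>+t. phi_ext \<phi>2 (ennreal b * (?L t / ennreal (w t))) * ennreal (w t) * indicator (Ival \<gamma>) t \<partial>lborel)
     = Qmod \<gamma> \<phi>2 w (\<lambda>x. b * f x)"
    unfolding Qmod_def level_rearr_scale[OF b] by (simp add: ennreal_times_divide)
  finally show ?thesis .
qed


lemma S_nonempty:
  assumes "orlicz_fun \<phi>" "f \<in> Mspace \<gamma> \<phi> w"
  shows "\<exists>\<epsilon>>0. Qmod \<gamma> \<phi> w (\<lambda>x. f x / \<epsilon>) \<le> 1"
proof -
  obtain k where k: "k > 0" "Qmod \<gamma> \<phi> w (\<lambda>x. k * f x) < \<infinity>"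
    using assms(2) unfolding Mspace_def by auto
  define q where "q = enn2real (Qmod \<gamma> \<phi> w (\<lambda>x. k * f x))"
  have q: "Qmod \<gamma> \<phi> w (\<lambda>x. k * f x) = ennreal q" "q \<ge> 0"
    using k(2) unfolding q_def by (auto simp: less_top[symmetric])
  define c where "c = 1 / (q + 1)"
  have c: "0 < c" "c \<le> 1" using q unfolding c_def by auto
  have "Qmod \<gamma> \<phi> w (\<lambda>x. c * (k * f x)) \<le> ennreal c * ennreal q"
    using Q_scale_le[OF assms(1) c, of \<gamma> w "\<lambda>x. k * f x"] q by simp
  also have "\<dots> = ennreal (q / (q + 1))" using c q by (simp add: ennreal_mult[symmetric] c_def)
  also have "\<dots> \<le> 1" using q by (simp add: ennreal_le_1)
  finally have le: "Qmod \<gamma> \<phi> w (\<lambda>x. c * (k * f x)) \<le> 1" .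
  have "(\<lambda>x. f x / (1 / (c * k))) = (\<lambda>x. c * (k * f x))" by (simp add: field_simps)
  then show ?thesis using le c k by (intro exI[of _ "1 / (c * k)"]) auto
qed

lemma suff:
  assumes o1: "orlicz_fun \<phi>1" and o2: "orlicz_fun \<phi>2" and b: "b > 0" and D: "D \<ge> 0"
    and Q: "\<And>f. Qmod \<gamma> \<phi>1 w f \<le> Qmod \<gamma> \<phi>2 w (\<lambda>x. b * f x) + ennreal D"
  shows "Mspace \<gamma> \<phi>2 w \<subseteq> Mspace \<gamma> \<phi>1 w \<and>
          (\<exists>C\<ge>0. \<forall>f\<in>Mspace \<gamma> \<phi>2 w. Mnorm \<gamma> \<phi>1 w f \<le> C * Mnorm \<gamma> \<phi>2 w f)"
proof
  show "Mspace \<gamma> \<phi>2 w \<subseteq> Mspace \<gamma> \<phi>1 w"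
  proof
    fix f assume f: "f \<in> Mspace \<gamma> \<phi>2 w"
    obtain k where k: "k > 0" "Qmod \<gamma> \<phi>2 w (\<lambda>x. k * f x) < \<infinity>"
      using f unfolding Mspace_def by auto
    have "(\<lambda>x. b * (k / b * f x)) = (\<lambda>x. k * f x)" using b by auto
    then have "Qmod \<gamma> \<phi>1 w (\<lambda>x. k / b * f x) \<le> Qmod \<gamma> \<phi>2 w (\<lambda>x. k * f x) + ennreal D"
      using Q[of "\<lambda>x. k / b * f x"] by simp
    also have "\<dots> < \<infinity>" using k by (simp add: less_top[symmetric])
    finally show "f \<in> Mspace \<gamma> \<phi>1 w" using f k b unfolding Mspace_def
      by (auto intro!: exI[of _ "k / b"])
  qed
  define C where "C = b * (1 + D)"
  have C: "C > 0" using b D unfolding C_def by auto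
  have "\<forall>f\<in>Mspace \<gamma> \<phi>2 w. Mnorm \<gamma> \<phi>1 w f \<le> C * Mnorm \<gamma> \<phi>2 w f"
  proof
    fix f assume f: "f \<in> Mspace \<gamma> \<phi>2 w"
    let ?S1 = "{\<epsilon>. \<epsilon> > 0 \<and> Qmod \<gamma> \<phi>1 w (\<lambda>x. f x / \<epsilon>) \<le> 1}"
    let ?S2 = "{\<epsilon>. \<epsilon> > 0 \<and> Qmod \<gamma> \<phi>2 w (\<lambda>x. f x / \<epsilon>) \<le> 1}"
    have ne: "?S2 \<noteq> {}" using S_nonempty[OF o2 f] by auto
    have "Mnorm \<gamma> \<phi>1 w f / C \<le> \<epsilon>" if e: "\<epsilon> \<in> ?S2" for \<epsilon>
    proof -
      have e0: "\<epsilon> > 0" using e by auto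
      have eq: "(\<lambda>x. f x / (C * \<epsilon>)) = (\<lambda>x. (1 / (1 + D)) * (f x / (b * \<epsilon>)))"
        using b D e0 unfolding C_def by (auto simp: field_simps)
      have c1: "0 < 1 / (1 + D)" "1 / (1 + D) \<le> 1" using D by auto
      have "Qmod \<gamma> \<phi>1 w (\<lambda>x. f x / (C * \<epsilon>)) \<le> ennreal (1 / (1 + D)) * Qmod \<gamma> \<phi>1 w (\<lambda>x. f x / (b * \<epsilon>))"
        unfolding eq by (rule Q_scale_le[OF o1 c1])
      also have "\<dots> \<le> ennreal (1 / (1 + D)) * (Qmod \<gamma> \<phi>2 w (\<lambda>x. b * (f x / (b * \<epsilon>))) + ennreal D)"
        by (intro mult_left_mono Q) auto
      also have "(\<lambda>x. b * (f x / (b * \<epsilon>))) = (\<lambda>x. f x / \<epsilon>)" using b e0 by auto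
      also have "ennreal (1 / (1 + D)) * (Qmod \<gamma> \<phi>2 w (\<lambda>x. f x / \<epsilon>) + ennreal D) \<le> ennreal (1 / (1 + D)) * (1 + ennreal D)"
        using e by (intro mult_left_mono add_right_mono) auto
      also have "\<dots> = 1"
      proof -
        have e1: "1 + ennreal D = ennreal (1 + D)" using D by (simp add: ennreal_plus)
        have e2: "ennreal (1 / (1 + D)) * ennreal (1 + D) = ennreal (1 / (1 + D) * (1 + D))"
          using D by (intro ennreal_mult[symmetric]) auto
        have e3: "1 / (1 + D) * (1 + D) = 1" using D by simp
        show ?thesis unfolding e1 e2 e3 by simp
      qed
      finally have "C * \<epsilon> \<in> ?S1" using C e0 by auto
      then have "Mnorm \<gamma> \<phi>1 w f \<le> C * \<epsilon>" unfolding Mnorm_def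
        by (intro cInf_lower) (auto intro!: bdd_belowI[of _ 0])
      then show ?thesis using C by (simp add: divide_le_eq mult.commute)
    qed
    then have "Mnorm \<gamma> \<phi>1 w f / C \<le> Mnorm \<gamma> \<phi>2 w f" unfolding Mnorm_def[of \<gamma> \<phi>2]
      using ne by (intro cInf_greatest) auto
    then show "Mnorm \<gamma> \<phi>1 w f \<le> C * Mnorm \<gamma> \<phi>2 w f" using C by (simp add: divide_le_eq mult.commute)
  qed
  then show "\<exists>C\<ge>0. \<forall>f\<in>Mspace \<gamma> \<phi>2 w. Mnorm \<gamma> \<phi>1 w f \<le> C * Mnorm \<gamma> \<phi>2 w f"
    using C by (intro exI[of _ C]) auto
qed



definition Wr :: "(real \<Rightarrow> real) \<Rightarrow> real \<Rightarrow> real \<Rightarrow> real" where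
  "Wr w x y = enn2real (Wint w x y)"

context
  fixes \<gamma> :: ereal and w :: "real \<Rightarrow> real"
  assumes w: "weight \<gamma> w"
begin

lemma inI: "0 \<le> t \<Longrightarrow> ereal t < \<gamma> \<Longrightarrow> t \<in> Ival \<gamma>" by (simp add: Ival_def)

lemma ereal_lt_trans: "x \<le> y \<Longrightarrow> ereal y < \<gamma> \<Longrightarrow> ereal x < \<gamma>"
proof -
  assume a: "x \<le> y" "ereal y < \<gamma>"
  have "ereal x \<le> ereal y" using a(1) by simp
  then show ?thesis using a(2) by (rule le_less_trans)
qed

lemma wpos: "t \<in> Ival \<gamma> \<Longrightarrow> w t > 0" using w unfolding weight_def by auto

lemma wmono: "s \<in> Ival \<gamma> \<Longrightarrow> t \<in> Ival \<gamma> \<Longrightarrow> s \<le> t \<Longrightarrow> w t \<le> w s"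
  using w unfolding weight_def by auto

lemma W_meas:
  assumes "0 \<le> x" "ereal y < \<gamma>"
  shows "(\<lambda>t. ennreal (w t) * indicator {x<..y} t) \<in> borel_measurable lborel"
proof -
  have y0: "0 \<le> y \<or> {x<..y} = {}" using assms by auto
  show ?thesis
  proof (cases "{x<..y} = {}")
    case True then show ?thesis by simp
  next
    case False
    then have y: "0 \<le> y" using assms by auto
    have "set_integrable lborel {0..y} w" using w y assms unfolding weight_def by auto
    then have m: "(\<lambda>t. indicator {0..y} t *\<^sub>R w t) \<in> borel_measurable lborel"
      unfolding set_integrable_def by (rule borel_measurable_integrable)
    have "(\<lambda>t. ennreal (indicator {0..y} t *\<^sub>R w t) * indicator {x<..y} t) \<in> borel_measurable lborel"
      using m by measurable
    moreover have "(\<lambda>t. ennreal (indicator {0..y} t *\<^sub>R w t) * indicator {x<..y} t) = (\<lambda>t. ennreal (w t) * indicator {x<..y} t)"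
      using assms by (auto simp: indicator_def fun_eq_iff)
    ultimately show ?thesis by simp
  qed
qed

lemma W_upper:
  assumes "0 \<le> x" "x \<le> y" "ereal y < \<gamma>"
  shows "Wint w x y \<le> ennreal ((y - x) * w x)"
proof -
  have xI: "x \<in> Ival \<gamma>" using assms by (intro inI) (use ereal_lt_trans[of x y] in auto)
  have "Wint w x y \<le> (\<integral>\<^sup>+t. ennreal (w x) * indicator {x<..y} t \<partial>lborel)"
    unfolding Wint_def
  proof (intro nn_integral_mono)
    fix t show "ennreal (w t) * indicator {x<..y} t \<le> ennreal (w x) * indicator {x<..y} t"
    proof (cases "t \<in> {x<..y}")
      case True
      then have "t \<in> Ival \<gamma>" using assms by (intro inI) (use ereal_lt_trans[of t y] in auto)
      then have "w t \<le> w x" using True xI by (intro wmono) auto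
      then show ?thesis using True by (auto intro: ennreal_leI)
    qed simp
  qed
  also have "\<dots> = ennreal ((y - x) * w x)"
    using assms wpos[OF xI] by (simp add: nn_integral_cmult_indicator ennreal_mult[symmetric] mult.commute)
  finally show ?thesis .
qed

lemma W_lower:
  assumes "0 \<le> x" "x \<le> y" "ereal y < \<gamma>"
  shows "ennreal ((y - x) * w y) \<le> Wint w x y"
proof -
  have yI: "y \<in> Ival \<gamma>" using assms by (intro inI) auto
  have "ennreal ((y - x) * w y) = (\<integral>\<^sup>+t. ennreal (w y) * indicator {x<..y} t \<partial>lborel)"
    using assms wpos[OF yI] by (simp add: nn_integral_cmult_indicator ennreal_mult[symmetric] mult.commute)
  also have "\<dots> \<le> Wint w x y"
    unfolding Wint_def
  proof (intro nn_integral_mono)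
    fix t show "ennreal (w y) * indicator {x<..y} t \<le> ennreal (w t) * indicator {x<..y} t"
    proof (cases "t \<in> {x<..y}")
      case True
      then have "t \<in> Ival \<gamma>" using assms by (intro inI) (use ereal_lt_trans[of t y] in auto)
      then have "w y \<le> w t" using True yI by (intro wmono) auto
      then show ?thesis using True by (auto intro: ennreal_leI)
    qed simp
  qed
  finally show ?thesis .
qed

lemma W_add:
  assumes "0 \<le> x" "x \<le> y" "y \<le> z" "ereal z < \<gamma>"
  shows "Wint w x z = Wint w x y + Wint w y z"
proof -
  have "(\<lambda>t. ennreal (w t) * indicator {x<..z} t) = (\<lambda>t. ennreal (w t) * indicator {x<..y} t + ennreal (w t) * indicator {y<..z} t)"
    using assms by (auto simp: indicator_def fun_eq_iff)
  moreover have y: "ereal y < \<gamma>" by (rule ereal_lt_trans[OF assms(3,4)])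
  have m1: "(\<lambda>t. ennreal (w t) * indicator {x<..y} t) \<in> borel_measurable lborel"
    by (rule W_meas) (use assms y in auto)
  have m2: "(\<lambda>t. ennreal (w t) * indicator {y<..z} t) \<in> borel_measurable lborel"
    by (rule W_meas) (use assms y in auto)
  ultimately show ?thesis unfolding Wint_def using nn_integral_add[OF m1 m2] by simp
qed

lemma Wr_eq:
  assumes "0 \<le> x" "x \<le> y" "ereal y < \<gamma>"
  shows "Wint w x y = ennreal (Wr w x y)"
proof -
  have "Wint w x y < top" using le_less_trans[OF W_upper[OF assms]] by simp
  then show ?thesis unfolding Wr_def by (simp add: less_top)
qed

lemma Wr_bounds:
  assumes "0 \<le> x" "x \<le> y" "ereal y < \<gamma>"
  shows "(y - x) * w y \<le> Wr w x y" "Wr w x y \<le> (y - x) * w x"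
proof -
  have yI: "y \<in> Ival \<gamma>" using assms by (intro inI) auto
  have xI: "x \<in> Ival \<gamma>" using assms by (intro inI) (use ereal_lt_trans[of x y] in auto)
  have nn: "0 \<le> Wr w x y" unfolding Wr_def by simp
  have "ennreal ((y - x) * w y) \<le> ennreal (Wr w x y)"
    using W_lower[OF assms] Wr_eq[OF assms] by simp
  then show "(y - x) * w y \<le> Wr w x y" using nn by (simp only: ennreal_le_iff)
  have "ennreal (Wr w x y) \<le> ennreal ((y - x) * w x)"
    using W_upper[OF assms] Wr_eq[OF assms] by simp
  moreover have "0 \<le> (y - x) * w x" using wpos[OF xI] assms by simp
  ultimately show "Wr w x y \<le> (y - x) * w x" by (simp only: ennreal_le_iff)
qed

lemma Wr_add:
  assumes "0 \<le> x" "x \<le> y" "y \<le> z" "ereal z < \<gamma>"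
  shows "Wr w x z = Wr w x y + Wr w y z"
proof -
  have y: "ereal y < \<gamma>" by (rule ereal_lt_trans[OF assms(3,4)])
  have "ennreal (Wr w x z) = ennreal (Wr w x y) + ennreal (Wr w y z)"
    using W_add[OF assms] Wr_eq[of x z] Wr_eq[of x y] Wr_eq[of y z] assms y by simp
  also have "\<dots> = ennreal (Wr w x y + Wr w y z)" by (simp add: ennreal_plus Wr_def)
  finally have e: "ennreal (Wr w x z) = ennreal (Wr w x y + Wr w y z)" .
  have nn1: "0 \<le> Wr w x z" and nn2: "0 \<le> Wr w x y + Wr w y z" unfolding Wr_def by simp_all
  show ?thesis using ennreal_inj[OF nn1 nn2] e by blast
qed

lemma Wr_pos:
  assumes "0 \<le> x" "x < y" "ereal y < \<gamma>"
  shows "Wr w x y > 0"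
proof -
  have yI: "y \<in> Ival \<gamma>" using assms by (intro inI) auto
  have "0 < (y - x) * w y" using assms wpos[OF yI] by simp
  also have "\<dots> \<le> Wr w x y" using Wr_bounds(1)[of x y] assms by simp
  finally show ?thesis .
qed

end


definition Gr :: "real \<Rightarrow> real \<Rightarrow> real \<Rightarrow> real" where
  "Gr a x y = max 0 (min y a - x)"

definition gch :: "real \<Rightarrow> real \<Rightarrow> ennreal" where
  "gch a t = (if t < a then 1 else 0)"

context
  fixes \<gamma> :: ereal and w :: "real \<Rightarrow> real" and a :: real
  assumes w: "weight \<gamma> w" and a0: "0 < a" and ag: "ereal a < \<gamma>"
begin

lemma Icc_sub: "{0..a} \<subseteq> Ival \<gamma>"
  using ag by (auto simp: Ival_def intro: ereal_lt_trans[OF w])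

lemma distf_chi: "distf \<gamma> (indicator {0..a}) s = (if s < 1 then ennreal a else 0)"
proof -
  have "{x \<in> Ival \<gamma>. s < ennreal \<bar>indicator {0..a} x :: real\<bar>} = (if s < 1 then {0..a} else {})"
    using Icc_sub by (auto simp: indicator_def)
  then show ?thesis unfolding distf_def using a0 by simp
qed

lemma rearr_chi: "rearr \<gamma> (indicator {0..a}) = gch a"
proof
  fix t
  show "rearr \<gamma> (indicator {0..a}) t = gch a t"
  proof (cases "t < a")
    case True
    have "\<not> ennreal a \<le> ennreal t"
    proof (cases "t < 0")
      case True then have "ennreal t = 0" by (simp add: ennreal_eq_0_iff)
      then show ?thesis using a0 by simp
    next
      case False then show ?thesis using \<open>t < a\<close> by (simp add: ennreal_le_iff)
    qed
    then have "{s. distf \<gamma> (indicator {0..a}) s \<le> ennreal t} = {1..}"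
      unfolding distf_chi by (auto simp: not_less)
    then show ?thesis unfolding rearr_def gch_def using True by simp
  next
    case False
    then have "{s. distf \<gamma> (indicator {0..a}) s \<le> ennreal t} = UNIV"
      unfolding distf_chi using a0 by (auto simp: ennreal_le_iff)
    then show ?thesis unfolding rearr_def gch_def using False by (simp add: bot_ennreal)
  qed
qed

lemma Gint_chi:
  assumes "x \<le> y"
  shows "Gint (gch a) x y = ennreal (Gr a x y)"
proof -
  have "Gint (gch a) x y = (\<integral>\<^sup>+t. indicator ({x<..y} \<inter> {..<a}) t \<partial>lborel)"
    unfolding Gint_def gch_def by (intro nn_integral_cong) (auto simp: indicator_def)
  also have "\<dots> = emeasure lborel ({x<..y} \<inter> {..<a})" by simp
  also have "\<dots> = ennreal (Gr a x y)"
  proof (cases "y < a")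
    case True
    then have "{x<..y} \<inter> {..<a} = {x<..y}" by auto
    then show ?thesis using True assms by (simp add: Gr_def)
  next
    case False
    show ?thesis
    proof (cases "x < a")
      case True
      then have "{x<..y} \<inter> {..<a} = {x<..<a}" using False by auto
      then show ?thesis using True False by (simp add: Gr_def)
    next
      case False2: False
      then have "{x<..y} \<inter> {..<a} = {}" by auto
      then show ?thesis using False False2 by (simp add: Gr_def)
    qed
  qed
  finally show ?thesis .
qed

lemma ratio_eq:
  assumes "0 \<le> x" "x < t" "ereal t < \<gamma>"
  shows "Gint (gch a) x t / Wint w x t = ennreal (Gr a x t / Wr w x t)"
proof -
  have "Wint w x t = ennreal (Wr w x t)" using Wr_eq[OF w] assms by simp
  moreover have "Wr w x t > 0" using Wr_pos[OF w] assms by simp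
  moreover have "Gr a x t \<ge> 0" by (simp add: Gr_def)
  ultimately show ?thesis using Gint_chi[of x t] assms by (simp add: divide_ennreal)
qed

lemma level_iff:
  "level_interval \<gamma> w (gch a) x y \<longleftrightarrow> 0 \<le> x \<and> x < y \<and> ereal y < \<gamma> \<and>
     (\<forall>t\<in>{x<..y}. Gr a x t / Wr w x t \<le> Gr a x y / Wr w x y)"
proof -
  have "0 \<le> x \<Longrightarrow> x < y \<Longrightarrow> ereal y < \<gamma> \<Longrightarrow> t \<in> {x<..y} \<Longrightarrow>
     (Gint (gch a) x t / Wint w x t \<le> Gint (gch a) x y / Wint w x y) =
     (Gr a x t / Wr w x t \<le> Gr a x y / Wr w x y)" for t
  proof -
    assume as: "0 \<le> x" "x < y" "ereal y < \<gamma>" "t \<in> {x<..y}"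
    have tg: "ereal t < \<gamma>" using as by (intro ereal_lt_trans[OF w, of t y]) auto
    have nn: "0 \<le> Gr a x y / Wr w x y"
      using Wr_pos[OF w, of x y] as by (simp add: Gr_def)
    show ?thesis using ratio_eq[of x t] ratio_eq[of x y] as tg nn by (simp add: ennreal_le_iff)
  qed
  then show ?thesis unfolding level_interval_def by auto
qed

lemma F2:
  assumes "level_interval \<gamma> w (gch a) x y" "x < a" "a < y"
  shows False
proof -
  have L: "0 \<le> x" "x < y" "ereal y < \<gamma>" "\<forall>t\<in>{x<..y}. Gr a x t / Wr w x t \<le> Gr a x y / Wr w x y"
    using assms(1) unfolding level_iff by auto
  have "Gr a x a / Wr w x a \<le> Gr a x y / Wr w x y" using L(4) assms by auto
  moreover have "Gr a x a = a - x" "Gr a x y = a - x" using assms by (auto simp: Gr_def)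
  moreover have p1: "Wr w x a > 0" using Wr_pos[OF w, of x a] L assms ag by auto
  moreover have "Wr w x y = Wr w x a + Wr w a y" using Wr_add[OF w, of x a y] L assms by auto
  moreover have "Wr w a y > 0" using Wr_pos[OF w, of a y] L assms by auto
  ultimately have h: "(a - x) / Wr w x a \<le> (a - x) / (Wr w x a + Wr w a y)" "Wr w a y > 0" "a - x > 0" "Wr w x a > 0"
    using assms by auto
  have "(a - x) / (Wr w x a + Wr w a y) < (a - x) / Wr w x a"
    by (rule divide_strict_left_mono) (use h in auto)
  then show False using h(1) by linarith
qed


lemma F1: "level_interval \<gamma> w (gch a) 0 a"
  unfolding level_iff
proof (intro conjI ballI)
  fix t assume t: "t \<in> {0<..a}"
  define A where "A = Wr w 0 t"
  define B where "B = Wr w t a"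
  have tI: "t \<in> Ival \<gamma>" using t ag by (intro inI[OF w]) (auto intro: ereal_lt_trans[OF w, of t a])
  have tg: "ereal t < \<gamma>" using t ag by (intro ereal_lt_trans[OF w, of t a]) auto
  have A0: "A > 0" unfolding A_def using Wr_pos[OF w, of 0 t] t tg by auto
  have Alow: "t * w t \<le> A" unfolding A_def using Wr_bounds(1)[OF w, of 0 t] t tg by auto
  have Bup: "B \<le> (a - t) * w t" unfolding B_def using Wr_bounds(2)[OF w, of t a] t ag by auto
  have B0: "B \<ge> 0" unfolding B_def Wr_def by simp
  have Wa: "Wr w 0 a = A + B" unfolding A_def B_def using Wr_add[OF w, of 0 t a] t ag by auto
  have "t * B \<le> t * ((a - t) * w t)" using Bup t by (intro mult_left_mono) auto
  also have "\<dots> = (a - t) * (t * w t)" by simp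
  also have "\<dots> \<le> (a - t) * A" using Alow t by (intro mult_left_mono) auto
  finally have key: "t * B \<le> (a - t) * A" .
  have "t * (A + B) \<le> a * A" using key by (simp add: algebra_simps)
  then have "t / A \<le> a / (A + B)" using A0 B0 by (simp add: field_simps)
  moreover have "Gr a 0 t = t" "Gr a 0 a = a" using t a0 by (auto simp: Gr_def)
  ultimately show "Gr a 0 t / Wr w 0 t \<le> Gr a 0 a / Wr w 0 a" unfolding Wa A_def by simp
qed (use a0 ag in auto)

lemma F3: "max_level_interval \<gamma> w (gch a) 0 a"
  unfolding max_level_interval_def
proof (rule conjI[OF F1], intro allI impI)
  fix a' b' assume h: "level_interval \<gamma> w (gch a) a' b' \<and> {0<..a} \<subseteq> {a'<..b'}"
  have L: "0 \<le> a'" using h unfolding level_interval_def by auto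
  have "a \<in> {a'<..b'}" using h a0 by auto
  then have ab: "a' < a" "a \<le> b'" by auto
  have "a' = 0"
  proof (rule ccontr)
    assume "a' \<noteq> 0"
    then have "a' \<in> {0<..a}" using L ab by auto
    then show False using h by auto
  qed
  moreover have "b' = a"
  proof (rule ccontr)
    assume "b' \<noteq> a"
    then have "a < b'" using ab by auto
    then show False using F2[of a' b'] h ab by auto
  qed
  ultimately show "a' = 0 \<and> b' = a" by simp
qed

lemma F4:
  assumes t: "0 < t" "t \<le> a" and m: "max_level_interval \<gamma> w (gch a) x y" and xy: "t \<in> {x<..y}"
  shows "x = 0 \<and> y = a"
proof -
  have L: "level_interval \<gamma> w (gch a) x y" using m unfolding max_level_interval_def by auto
  have x0: "0 \<le> x" using L unfolding level_interval_def by auto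
  have "y \<le> a"
  proof (rule ccontr)
    assume "\<not> y \<le> a"
    then show False using F2[OF L] xy t by auto
  qed
  then have "{x<..y} \<subseteq> {0<..a}" using x0 by auto
  then have "0 = x \<and> a = y" using m F1 unfolding max_level_interval_def by blast
  then show ?thesis by simp
qed

lemma F5:
  assumes t: "a < t" and m: "max_level_interval \<gamma> w (gch a) x y" and xy: "t \<in> {x<..y}"
  shows "Gint (gch a) x y = 0"
proof -
  have L: "level_interval \<gamma> w (gch a) x y" using m unfolding max_level_interval_def by auto
  have "a \<le> x"
  proof (rule ccontr)
    assume "\<not> a \<le> x"
    then show False using F2[OF L] xy t by auto
  qed
  moreover have "x \<le> y" using xy by auto
  ultimately show ?thesis using Gint_chi[of x y] by (simp add: Gr_def)
qed

lemma LV1: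
  assumes t: "0 < t" "t \<le> a"
  shows "level_fun \<gamma> w (gch a) t = ennreal (a / Wr w 0 a) * ennreal (w t)"
proof -
  let ?P = "\<lambda>(x, y). max_level_interval \<gamma> w (gch a) x y \<and> t \<in> {x<..y}"
  have P0: "?P (0, a)" using F3 t by auto
  then have ex: "\<exists>x y. max_level_interval \<gamma> w (gch a) x y \<and> t \<in> {x<..y}" by auto
  have "?P (Eps ?P)" using P0 by (rule someI)
  moreover obtain x y where xy: "Eps ?P = (x, y)" by (cases "Eps ?P")
  ultimately have "x = 0 \<and> y = a" using F4[OF t] by auto
  then have E: "Eps ?P = (0, a)" using xy by simp
  have "level_fun \<gamma> w (gch a) t = Gint (gch a) 0 a / Wint w 0 a * ennreal (w t)"
    unfolding level_fun_def using ex E by simp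
  also have "\<dots> = ennreal (Gr a 0 a / Wr w 0 a) * ennreal (w t)"
    using ratio_eq[of 0 a] a0 ag by simp
  also have "Gr a 0 a = a" using a0 by (simp add: Gr_def)
  finally show ?thesis .
qed

lemma LV2:
  assumes t: "a < t"
  shows "level_fun \<gamma> w (gch a) t = 0"
proof (cases "\<exists>x y. max_level_interval \<gamma> w (gch a) x y \<and> t \<in> {x<..y}")
  case True
  let ?P = "\<lambda>(x, y). max_level_interval \<gamma> w (gch a) x y \<and> t \<in> {x<..y}"
  from True obtain x0 y0 where "?P (x0, y0)" by auto
  then have "?P (Eps ?P)" by (rule someI)
  moreover obtain x y where xy: "Eps ?P = (x, y)" by (cases "Eps ?P")
  ultimately have "Gint (gch a) x y = 0" using F5[OF t] by auto
  then show ?thesis unfolding level_fun_def using True xy by simp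
next
  case False
  then show ?thesis unfolding level_fun_def if_not_P[OF False] using t by (simp add: gch_def)
qed

lemma Q_chi:
  assumes o: "orlicz_fun \<phi>" and c: "c > 0"
  shows "Qmod \<gamma> \<phi> w (\<lambda>x. c * indicator {0..a} x) = ennreal (\<phi> (c * a / Wr w 0 a) * Wr w 0 a)"
proof -
  define W where "W = Wr w 0 a"
  have W0: "W > 0" unfolding W_def using Wr_pos[OF w, of 0 a] a0 ag by auto
  have pn: "0 \<le> \<phi> (c * a / W)" using W0 c a0 by (intro orl_nonneg[OF o]) auto
  have LF: "level_fun \<gamma> w (rearr \<gamma> (\<lambda>x. c * indicator {0..a} x)) t = ennreal c * level_fun \<gamma> w (gch a) t" for t
    using level_rearr_scale[OF c, of \<gamma> w "indicator {0..a}"] rearr_chi by simp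
  have AE: "AE t in lborel. phi_ext \<phi> (level_fun \<gamma> w (rearr \<gamma> (\<lambda>x. c * indicator {0..a} x)) t / ennreal (w t)) * ennreal (w t) * indicator (Ival \<gamma>) t
     = ennreal (\<phi> (c * a / W)) * (ennreal (w t) * indicator {0<..a} t)"
    using AE_lborel_singleton[of 0]
  proof eventually_elim
    fix t :: real assume t0: "t \<noteq> 0"
    show "phi_ext \<phi> (level_fun \<gamma> w (rearr \<gamma> (\<lambda>x. c * indicator {0..a} x)) t / ennreal (w t)) * ennreal (w t) * indicator (Ival \<gamma>) t
     = ennreal (\<phi> (c * a / W)) * (ennreal (w t) * indicator {0<..a} t)"
    proof (cases "t \<in> {0<..a}")
      case True
      have tI: "t \<in> Ival \<gamma>" using True ag by (intro inI[OF w]) (auto intro: ereal_lt_trans[OF w, of t a])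
      have wt: "w t > 0" using wpos[OF w tI] .
      have "ennreal c * (ennreal (a / W) * ennreal (w t)) / ennreal (w t) = ennreal (c * (a / W) * w t / w t)"
        using wt W0 c a0 by (simp add: ennreal_mult[symmetric] divide_ennreal)
      also have "c * (a / W) * w t / w t = c * a / W" using wt by simp
      finally have e: "ennreal c * (ennreal (a / W) * ennreal (w t)) / ennreal (w t) = ennreal (c * a / W)" .
      have tt: "0 < t" "t \<le> a" using True by auto
      show ?thesis unfolding LF LV1[OF tt, folded W_def] using True tI e c a0 W0
        by (simp add: phi_ext_def)
    next
      case False
      show ?thesis
      proof (cases "t \<in> Ival \<gamma>")
        case True
        then have "a < t" using False t0 by (auto simp: Ival_def)
        then show ?thesis unfolding LF LV2[OF \<open>a < t\<close>] using True False o
          by (simp add: phi_ext_def orlicz_fun_def)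
      qed (use False in simp)
    qed
  qed
  have "Qmod \<gamma> \<phi> w (\<lambda>x. c * indicator {0..a} x) = (\<integral>\<^sup>+t. ennreal (\<phi> (c * a / W)) * (ennreal (w t) * indicator {0<..a} t) \<partial>lborel)"
    unfolding Qmod_def by (rule nn_integral_cong_AE) (use AE in simp)
  also have "\<dots> = ennreal (\<phi> (c * a / W)) * Wint w 0 a"
    unfolding Wint_def using W_meas[OF w, of 0 a] ag by (subst nn_integral_cmult) auto
  also have "\<dots> = ennreal (\<phi> (c * a / W) * W)"
    unfolding W_def using Wr_eq[OF w, of 0 a] a0 ag pn Wr_pos[OF w, of 0 a]
    by (simp add: ennreal_mult W_def)
  finally show ?thesis unfolding W_def .
qed

end


context
  fixes \<gamma> :: ereal and w :: "real \<Rightarrow> real"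
  assumes w: "weight \<gamma> w"
begin

lemma Wr00: "Wr w 0 0 = 0"
  unfolding Wr_def Wint_def by simp

lemma Wr_lip:
  assumes "0 \<le> x" "x \<le> x'" "ereal x' < \<gamma>"
  shows "\<bar>Wr w 0 x' - Wr w 0 x\<bar> \<le> w 0 * (x' - x)"
proof -
  have I0: "0 \<in> Ival \<gamma>" and xI: "x \<in> Ival \<gamma>" using assms
    by (auto intro!: inI[OF w] ereal_lt_trans[OF w, of 0 x'] ereal_lt_trans[OF w, of x x'])
  have "Wr w 0 x' = Wr w 0 x + Wr w x x'" using Wr_add[OF w, of 0 x x'] assms by auto
  moreover have "0 \<le> Wr w x x'" unfolding Wr_def by simp
  moreover have "Wr w x x' \<le> (x' - x) * w x" using Wr_bounds(2)[OF w, of x x'] assms by auto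
  moreover have "(x' - x) * w x \<le> (x' - x) * w 0" using wmono[OF w I0 xI] assms by (intro mult_left_mono) auto
  ultimately show ?thesis by (simp add: mult.commute)
qed

lemma W_ivt:
  assumes a0: "0 < a0" "ereal a0 < \<gamma>" and y: "0 < y" "y \<le> Wr w 0 a0"
  shows "\<exists>a. 0 < a \<and> a \<le> a0 \<and> Wr w 0 a = y"
proof -
  have I0: "0 \<in> Ival \<gamma>" using a0 by (auto intro!: inI[OF w] ereal_lt_trans[OF w, of 0 a0])
  have w0: "w 0 > 0" using wpos[OF w I0] .
  have cont: "continuous_on {0..a0} (\<lambda>x. Wr w 0 x)"
    unfolding continuous_on_iff
  proof (intro ballI allI impI)
    fix x e :: real assume x: "x \<in> {0..a0}" and e: "e > 0"
    show "\<exists>d>0. \<forall>x'\<in>{0..a0}. dist x' x < d \<longrightarrow> dist (Wr w 0 x') (Wr w 0 x) < e"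
    proof (intro exI[of _ "e / w 0"] conjI ballI impI)
      show "e / w 0 > 0" using e w0 by simp
      fix x' assume x': "x' \<in> {0..a0}" and d: "dist x' x < e / w 0"
      have "dist (Wr w 0 x') (Wr w 0 x) \<le> w 0 * \<bar>x' - x\<bar>"
      proof (cases "x \<le> x'")
        case True
        have "ereal x' < \<gamma>" using x' a0 by (intro ereal_lt_trans[OF w, of x' a0]) auto
        then show ?thesis using Wr_lip[of x x'] True x by (simp add: dist_real_def)
      next
        case False
        have "ereal x < \<gamma>" using x a0 by (intro ereal_lt_trans[OF w, of x a0]) auto
        then show ?thesis using Wr_lip[of x' x] False x' by (simp add: dist_real_def abs_minus_commute)
      qed
      also have "\<dots> < w 0 * (e / w 0)" using d w0 by (intro mult_strict_left_mono) (auto simp: dist_real_def)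
      also have "\<dots> = e" using w0 by simp
      finally show "dist (Wr w 0 x') (Wr w 0 x) < e" .
    qed
  qed
  obtain a where a: "0 \<le> a" "a \<le> a0" "Wr w 0 a = y"
    using IVT'[of "\<lambda>x. Wr w 0 x" 0 y a0] cont y a0 Wr00 by auto
  then have "a \<noteq> 0" using y Wr00 by auto
  then show ?thesis using a by (intro exI[of _ a]) auto
qed

lemma chi_in_M:
  assumes o: "orlicz_fun \<phi>" and a: "0 < a" "ereal a < \<gamma>"
  shows "indicator {0..a} \<in> Mspace \<gamma> \<phi> w"
proof -
  have m: "(indicator {0..a} :: real \<Rightarrow> real) \<in> borel_measurable (restrict_space lebesgue (Ival \<gamma>))"
    by (intro measurable_restrict_space1 measurable_completion borel_measurable_indicator) simp
  have "Qmod \<gamma> \<phi> w (\<lambda>x. 1 * indicator {0..a} x) < \<infinity>"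
    using Q_chi[OF w a o, of 1] by simp
  then show ?thesis unfolding Mspace_def using m by (auto intro!: exI[of _ 1])
qed

lemma nec:
  assumes o1: "orlicz_fun \<phi>1" and o2: "orlicz_fun \<phi>2" and C: "C \<ge> 0"
    and H: "\<forall>f\<in>Mspace \<gamma> \<phi>2 w. Mnorm \<gamma> \<phi>1 w f \<le> C * Mnorm \<gamma> \<phi>2 w f"
    and a: "0 < a" "ereal a < \<gamma>" and v: "v > 0" and Wv: "Wr w 0 a * \<phi>1 v = 1"
  shows "\<phi>1 v \<le> \<phi>2 ((2 * C + 1) * v)"
proof (rule ccontr)
  assume "\<not> ?thesis"
  then have lt: "\<phi>2 ((2 * C + 1) * v) < \<phi>1 v" by simp
  define B where "B = 2 * C + 1"
  have B: "B > 0" "C / B < 1" using C unfolding B_def by (auto simp: divide_less_eq)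
  define W where "W = Wr w 0 a"
  have W0: "W > 0" unfolding W_def using Wr_pos[OF w, of 0 a] a by auto
  have Wv': "W * \<phi>1 v = 1" using Wv unfolding W_def .
  let ?f = "indicator {0..a} :: real \<Rightarrow> real"
  have Qe: "Qmod \<gamma> \<phi> w (\<lambda>x. ?f x / \<epsilon>) = ennreal (\<phi> (a / (\<epsilon> * W)) * W)"
    if "orlicz_fun \<phi>" "\<epsilon> > 0" for \<phi> \<epsilon>
  proof -
    have "(\<lambda>x. ?f x / \<epsilon>) = (\<lambda>x. (1 / \<epsilon>) * ?f x)" by auto
    moreover have "1 / \<epsilon> * a / W = a / (\<epsilon> * W)" by simp
    ultimately show ?thesis using Q_chi[OF w a that(1), of "1 / \<epsilon>"] that unfolding W_def by simp
  qed
  define e0 where "e0 = a / (W * v)"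
  have e0: "e0 > 0" unfolding e0_def using a W0 v by simp
  have ae0: "a / (e0 * W) = v" unfolding e0_def using a W0 v by (simp add: field_simps)
  have S1ne: "e0 \<in> {\<epsilon>. \<epsilon> > 0 \<and> Qmod \<gamma> \<phi>1 w (\<lambda>x. ?f x / \<epsilon>) \<le> 1}"
    using Qe[OF o1 e0] ae0 Wv' e0 by (simp add: mult.commute)
  have lb: "e0 \<le> \<epsilon>" if "\<epsilon> \<in> {\<epsilon>. \<epsilon> > 0 \<and> Qmod \<gamma> \<phi>1 w (\<lambda>x. ?f x / \<epsilon>) \<le> 1}" for \<epsilon>
  proof (rule ccontr)
    assume "\<not> e0 \<le> \<epsilon>"
    then have lt2: "\<epsilon> < e0" by simp
    have ep: "\<epsilon> > 0" using that by simp
    have "v < a / (\<epsilon> * W)" unfolding ae0[symmetric] using lt2 ep a W0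
      by (intro divide_strict_left_mono) auto
    then have "\<phi>1 v < \<phi>1 (a / (\<epsilon> * W))" using v by (intro orl_strict[OF o1]) auto
    then have "W * \<phi>1 v < W * \<phi>1 (a / (\<epsilon> * W))" using W0 by (intro mult_strict_left_mono)
    then have "1 < \<phi>1 (a / (\<epsilon> * W)) * W" using Wv' by (simp add: mult.commute)
    moreover have "ennreal (\<phi>1 (a / (\<epsilon> * W)) * W) \<le> 1" using that Qe[OF o1 ep] by simp
    ultimately show False by (simp add: ennreal_le_1)
  qed
  have N1: "e0 \<le> Mnorm \<gamma> \<phi>1 w ?f" unfolding Mnorm_def
    using S1ne lb by (intro cInf_greatest) auto
  define e2 where "e2 = a / (B * v * W)"
  have e2: "e2 > 0" unfolding e2_def using a W0 v B by simp
  have ae2: "a / (e2 * W) = B * v" unfolding e2_def using a W0 v B by (simp add: field_simps)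
  have "W * \<phi>2 (B * v) \<le> W * \<phi>1 v" using lt W0 unfolding B_def by (intro mult_left_mono) auto
  then have "\<phi>2 (B * v) * W \<le> 1" using Wv' by (simp add: mult.commute)
  then have "e2 \<in> {\<epsilon>. \<epsilon> > 0 \<and> Qmod \<gamma> \<phi>2 w (\<lambda>x. ?f x / \<epsilon>) \<le> 1}"
    using Qe[OF o2 e2] ae2 e2 by simp
  then have N2: "Mnorm \<gamma> \<phi>2 w ?f \<le> e2" unfolding Mnorm_def
    by (intro cInf_lower) (auto intro!: bdd_belowI[of _ 0])
  have "?f \<in> Mspace \<gamma> \<phi>2 w" by (rule chi_in_M[OF o2 a])
  then have "e0 \<le> C * Mnorm \<gamma> \<phi>2 w ?f" using H N1 by force
  also have "\<dots> \<le> C * e2" using N2 C by (intro mult_left_mono) auto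
  also have "C * e2 = (C / B) * e0" unfolding e2_def e0_def using B W0 v by (simp add: field_simps)
  also have "\<dots> < 1 * e0" using B e0 by (intro mult_strict_right_mono) auto
  also have "\<dots> = e0" by simp
  finally show False by simp
qed

end

lemma W_unbounded:
  assumes w: "weight \<infinity> w"
  shows "\<exists>b>0. y \<le> Wr w 0 b"
proof (rule ccontr)
  assume "\<not> ?thesis"
  then have lt: "\<And>b. b > 0 \<Longrightarrow> Wr w 0 b < y" by (auto simp: not_le)
  let ?F = "\<lambda>n t. ennreal (w t) * indicator {0<..real n} t"
  have bnd: "integral\<^sup>N lborel (?F n) \<le> ennreal y" for n
  proof (cases "n = 0")
    case True then show ?thesis by simp
  next
    case False
    then have "integral\<^sup>N lborel (?F n) = ennreal (Wr w 0 (real n))"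
      using Wr_eq[OF w, of 0 "real n"] unfolding Wint_def by simp
    also have "\<dots> \<le> ennreal y" using lt[of "real n"] False by (intro ennreal_leI) auto
    finally show ?thesis .
  qed
  have AE: "AE t in lborel. ennreal (w t) * indicator {0..} t = (SUP n. ?F n t)"
    using AE_lborel_singleton[of 0]
  proof eventually_elim
    fix t :: real assume t0: "t \<noteq> 0"
    show "ennreal (w t) * indicator {0..} t = (SUP n. ?F n t)"
    proof (cases "t > 0")
      case True
      obtain n :: nat where n: "t \<le> real n" using real_arch_simple by blast
      have "ennreal (w t) * indicator {0..} t \<le> (SUP n. ?F n t)"
        using True n by (intro SUP_upper2[of n]) auto
      moreover have "(SUP n. ?F n t) \<le> ennreal (w t) * indicator {0..} t"
        using True by (intro SUP_least) (auto simp: indicator_def)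
      ultimately show ?thesis by (rule antisym)
    next
      case False then show ?thesis using t0 by (simp add: indicator_def)
    qed
  qed
  have "(\<integral>\<^sup>+ t\<in>{0..}. ennreal (w t) \<partial>lborel) = (\<integral>\<^sup>+ t. (SUP n. ?F n t) \<partial>lborel)"
    by (rule nn_integral_cong_AE) (use AE in simp)
  also have "\<dots> = (SUP n. integral\<^sup>N lborel (?F n))"
  proof (rule nn_integral_monotone_convergence_SUP)
    show "incseq ?F"
      by (intro incseq_SucI le_funI mult_left_mono) (auto simp: indicator_def)
    show "\<And>i. ?F i \<in> borel_measurable lborel" using W_meas[OF w] by simp
  qed
  also have "\<dots> \<le> ennreal y" by (intro SUP_least bnd)
  finally have "(\<integral>\<^sup>+ t\<in>{0..}. ennreal (w t) \<partial>lborel) \<le> ennreal y" .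
  then show False using w unfolding weight_def by (simp add: top_unique)
qed



theorem mainTheorem13:
  fixes \<gamma> :: ereal and \<phi>1 \<phi>2 w :: "real \<Rightarrow> real"
  assumes "0 < \<gamma>"
    and "orlicz_fun \<phi>1" and "orlicz_fun \<phi>2"
    and "weight \<gamma> w"
  shows "(if \<gamma> = \<infinity> then orlicz_prec \<phi>1 \<phi>2 else orlicz_prec_inf \<phi>1 \<phi>2) \<longleftrightarrow>
         (Mspace \<gamma> \<phi>2 w \<subseteq> Mspace \<gamma> \<phi>1 w \<and>
          (\<exists>C\<ge>0. \<forall>f\<in>Mspace \<gamma> \<phi>2 w. Mnorm \<gamma> \<phi>1 w f \<le> C * Mnorm \<gamma> \<phi>2 w f))"
proof -
  note g0 = assms(1) and o1 = assms(2) and o2 = assms(3) and w = assms(4)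
  have I0: "0 \<in> Ival \<gamma>" using g0 by (simp add: Ival_def zero_ereal_def)
  have w0: "w 0 > 0" using wpos[OF w I0] .
  have phi0: "\<phi>2 0 = 0" "\<phi>1 0 = 0" using o1 o2 unfolding orlicz_fun_def by auto
  show ?thesis
  proof (cases "\<gamma> = \<infinity>")
    case True
    have "orlicz_prec \<phi>1 \<phi>2 \<longleftrightarrow> (Mspace \<gamma> \<phi>2 w \<subseteq> Mspace \<gamma> \<phi>1 w \<and>
          (\<exists>C\<ge>0. \<forall>f\<in>Mspace \<gamma> \<phi>2 w. Mnorm \<gamma> \<phi>1 w f \<le> C * Mnorm \<gamma> \<phi>2 w f))"
    proof
      assume "orlicz_prec \<phi>1 \<phi>2"
      then obtain b where b: "b > 0" "\<forall>u\<ge>0. \<phi>1 u \<le> \<phi>2 (b * u)" unfolding orlicz_prec_def by auto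
      have cmp: "\<forall>x\<ge>0. \<phi>1 x \<le> \<phi>2 (b * x) + 0" using b by simp
      show "Mspace \<gamma> \<phi>2 w \<subseteq> Mspace \<gamma> \<phi>1 w \<and>
          (\<exists>C\<ge>0. \<forall>f\<in>Mspace \<gamma> \<phi>2 w. Mnorm \<gamma> \<phi>1 w f \<le> C * Mnorm \<gamma> \<phi>2 w f)"
      proof (rule suff[OF o1 o2 b(1), of 0])
        fix f
        show "Qmod \<gamma> \<phi>1 w f \<le> Qmod \<gamma> \<phi>2 w (\<lambda>x. b * f x) + ennreal 0"
          using Q_cmp[OF w g0 cmp b(1) order_refl[of 0], where f=f] by simp
      qed simp
    next
      assume R: "Mspace \<gamma> \<phi>2 w \<subseteq> Mspace \<gamma> \<phi>1 w \<and>
          (\<exists>C\<ge>0. \<forall>f\<in>Mspace \<gamma> \<phi>2 w. Mnorm \<gamma> \<phi>1 w f \<le> C * Mnorm \<gamma> \<phi>2 w f)"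
      then obtain C where C: "C \<ge> 0" "\<forall>f\<in>Mspace \<gamma> \<phi>2 w. Mnorm \<gamma> \<phi>1 w f \<le> C * Mnorm \<gamma> \<phi>2 w f" by auto
      have "\<phi>1 u \<le> \<phi>2 ((2 * C + 1) * u)" if u: "u \<ge> 0" for u
      proof (cases "u = 0")
        case True then show ?thesis using phi0 by simp
      next
        case False
        then have u0: "u > 0" using u by simp
        have p: "\<phi>1 u > 0" using o1 u0 unfolding orlicz_fun_def by auto
        obtain b0 where b0: "b0 > 0" "1 / \<phi>1 u \<le> Wr w 0 b0"
          using W_unbounded[of w "1 / \<phi>1 u"] w True by auto
        have b0g: "ereal b0 < \<gamma>" using True by simp
        obtain a where a: "0 < a" "a \<le> b0" "Wr w 0 a = 1 / \<phi>1 u"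
          using W_ivt[OF w b0(1) b0g, of "1 / \<phi>1 u"] b0 p by auto
        have ag: "ereal a < \<gamma>" using True by simp
        have "Wr w 0 a * \<phi>1 u = 1" using a p by simp
        then show ?thesis by (rule nec[OF w o1 o2 C(1) C(2) a(1) ag u0])
      qed
      moreover have "2 * C + 1 > 0" using C by simp
      ultimately show "orlicz_prec \<phi>1 \<phi>2" unfolding orlicz_prec_def by blast
    qed
    then show ?thesis using True by simp
  next
    case False
    then obtain g where g: "\<gamma> = ereal g" using g0 by (cases \<gamma>) auto
    have gpos: "g > 0" using g0 g by simp
    have "orlicz_prec_inf \<phi>1 \<phi>2 \<longleftrightarrow> (Mspace \<gamma> \<phi>2 w \<subseteq> Mspace \<gamma> \<phi>1 w \<and>
          (\<exists>C\<ge>0. \<forall>f\<in>Mspace \<gamma> \<phi>2 w. Mnorm \<gamma> \<phi>1 w f \<le> C * Mnorm \<gamma> \<phi>2 w f))"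
    proof
      assume "orlicz_prec_inf \<phi>1 \<phi>2"
      then obtain b u0 where b: "b > 0" "u0 \<ge> 0" "\<forall>u\<ge>u0. \<phi>1 u \<le> \<phi>2 (b * u)"
        unfolding orlicz_prec_inf_def by auto
      define K where "K = \<phi>1 u0"
      have K: "K \<ge> 0" unfolding K_def using orl_nonneg[OF o1 b(2)] .
      have cmp: "\<forall>x\<ge>0. \<phi>1 x \<le> \<phi>2 (b * x) + K"
      proof (intro allI impI)
        fix x :: real assume x: "x \<ge> 0"
        show "\<phi>1 x \<le> \<phi>2 (b * x) + K"
        proof (cases "x \<ge> u0")
          case True then show ?thesis using b K by force
        next
          case False
          then have "\<phi>1 x \<le> K" unfolding K_def using x by (intro orl_mono[OF o1]) auto
          moreover have "0 \<le> \<phi>2 (b * x)" using x b by (intro orl_nonneg[OF o2]) auto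
          ultimately show ?thesis by simp
        qed
      qed
      have Iv: "Ival \<gamma> = {0..<g}" unfolding g Ival_def by auto
      have int: "(\<integral>\<^sup>+t. ennreal (w 0) * indicator (Ival \<gamma>) t \<partial>lborel) = ennreal (w 0 * g)"
        unfolding Iv using gpos w0 by (simp add: nn_integral_cmult_indicator ennreal_mult)
      show "Mspace \<gamma> \<phi>2 w \<subseteq> Mspace \<gamma> \<phi>1 w \<and>
          (\<exists>C\<ge>0. \<forall>f\<in>Mspace \<gamma> \<phi>2 w. Mnorm \<gamma> \<phi>1 w f \<le> C * Mnorm \<gamma> \<phi>2 w f)"
      proof (rule suff[OF o1 o2 b(1), of "K * (w 0 * g)"])
        fix f
        show "Qmod \<gamma> \<phi>1 w f \<le> Qmod \<gamma> \<phi>2 w (\<lambda>x. b * f x) + ennreal (K * (w 0 * g))"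
          using Q_cmp[OF w g0 cmp b(1) K, where f=f] int K w0 gpos by (simp add: ennreal_mult)
      qed (use K w0 gpos in simp)
    next
      assume R: "Mspace \<gamma> \<phi>2 w \<subseteq> Mspace \<gamma> \<phi>1 w \<and>
          (\<exists>C\<ge>0. \<forall>f\<in>Mspace \<gamma> \<phi>2 w. Mnorm \<gamma> \<phi>1 w f \<le> C * Mnorm \<gamma> \<phi>2 w f)"
      then obtain C where C: "C \<ge> 0" "\<forall>f\<in>Mspace \<gamma> \<phi>2 w. Mnorm \<gamma> \<phi>1 w f \<le> C * Mnorm \<gamma> \<phi>2 w f" by auto
      define a0 where "a0 = g / 2"
      have a0: "0 < a0" "ereal a0 < \<gamma>" unfolding a0_def g using gpos by auto
      define Y0 where "Y0 = Wr w 0 a0"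
      have Y0: "Y0 > 0" unfolding Y0_def using Wr_pos[OF w, of 0 a0] a0 by auto
      have p1: "\<phi>1 1 > 0" using o1 unfolding orlicz_fun_def by auto
      define u0 where "u0 = max 1 ((1 / Y0) / \<phi>1 1)"
      have u01: "u0 \<ge> 1" unfolding u0_def by simp
      have "\<phi>1 u \<le> \<phi>2 ((2 * C + 1) * u)" if u: "u \<ge> u0" for u
      proof -
        have u0p: "u > 0" using u u01 by simp
        have "(1 / Y0) / \<phi>1 1 \<le> u0" unfolding u0_def by simp
        then have "(1 / Y0) / \<phi>1 1 * \<phi>1 1 \<le> u0 * \<phi>1 1" using p1 by (intro mult_right_mono) auto
        then have "1 / Y0 \<le> u0 * \<phi>1 1" using p1 by simp
        also have "\<dots> \<le> \<phi>1 u0" by (rule orl_ge[OF o1 u01])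
        also have "\<dots> \<le> \<phi>1 u" using u u01 by (intro orl_mono[OF o1]) auto
        finally have le: "1 / Y0 \<le> \<phi>1 u" .
        have p: "\<phi>1 u > 0" using o1 u0p unfolding orlicz_fun_def by auto
        have "1 / \<phi>1 u \<le> Y0" using le Y0 p by (simp add: field_simps)
        then obtain a where a: "0 < a" "a \<le> a0" "Wr w 0 a = 1 / \<phi>1 u"
          using W_ivt[OF w a0, of "1 / \<phi>1 u"] p unfolding Y0_def by auto
        have ag: "ereal a < \<gamma>" using a a0 by (intro ereal_lt_trans[OF w, of a a0]) auto
        have "Wr w 0 a * \<phi>1 u = 1" using a p by simp
        then show ?thesis by (rule nec[OF w o1 o2 C(1) C(2) a(1) ag u0p])
      qed
      moreover have "2 * C + 1 > 0" using C by simp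
      moreover have "u0 \<ge> 0" using u01 by simp
      ultimately show "orlicz_prec_inf \<phi>1 \<phi>2" unfolding orlicz_prec_inf_def by blast
    qed
    then show ?thesis using False by simp
  qed
qed

end
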